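(* For $n\ge 2$, the letter in position $idx$ ($1\le idx\le 2\cdot4^{n-2}-1$) of the Koch code $w_n$ equals $1$ if and only if $$idx=4^{i}(2k-1)\quad\text{for some } i\in\{0,1,\dots,n-2\},\ k\in\{1,2,\dots,4^{\,n-2-i}\}.$$ Consequently $w_n$ contains exactly $\frac{4^{n-1}-1}{3}$ letters $1$ and exactly $\frac{2(4^{n-2}-1)}{3}$ letters $0$.
   Context: Let $R_\theta$ denote counterclockwise rotation of $\mathbb R^2$ by the angle $\theta$. The standard Koch curve at step $n$ is the polygon $K_n$ with vertices $r_1,\dots,r_{4^{n-1}+1}$ defined recursively: $K_1$ has vertices $(0,0),(1,0)$; $K_{n+1}$ is obtained from $K_n$ by replacing each edge from $p$ to $q$, in order, by the four edges through the points $p,\ p+\tfrac13(q-p),\ p+\tfrac13(q-p)+\tfrac13R_{\pi/3}(q-p),\ p+\tfrac23(q-p),\ q$, and numbering the resulting vertices consecutively starting from $(0,0)$. A vertex $r_i$ ($2\le i\le 4^{n-1}$) is a sharp point if the angle $\angle r_{i-1}r_ir_{i+1}$ equals $\pi/3$. For $n\ge 2$ the Koch code at step $n$ is the word $w_n=c_1\cdots c_{2\cdot4^{n-2}-1}$ over $\{0,1\}$ with $c_k=1$ iff $r_{2k+1}$ is a sharp point of $K_n$. (Equivalently, $w_2=1$ and $w_{n+1}=w_n0w_n1w_n0w_n$.) *)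

theory Defs
  imports "HOL-Analysis.Analysis"
begin

text \<open>Points of the plane are represented as complex numbers; counterclockwise
rotation by pi/3 is multiplication by cis (pi/3).\<close>

definition koch_edge :: "complex \<Rightarrow> complex \<Rightarrow> complex list" where
  "koch_edge p q =
     [p, p + (q - p) / 3, p + (q - p) / 3 + cis (pi / 3) * ((q - p) / 3), p + 2 * (q - p) / 3]"

fun koch_refine :: "complex list \<Rightarrow> complex list" where
  "koch_refine [] = []"
| "koch_refine [q] = [q]"
| "koch_refine (p # q # rest) = koch_edge p q @ koch_refine (q # rest)"

text \<open>Vertex list of the Koch curve K_n (index 0 unused, set equal to K_1).\<close>
fun koch_curve :: "nat \<Rightarrow> complex list" where
  "koch_curve 0 = [0, 1]"
| "koch_curve (Suc 0) = [0, 1]"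
| "koch_curve (Suc (Suc n)) = koch_refine (koch_curve (Suc n))"

text \<open>The vertex r_i (1-based) of K_n.\<close>
definition koch_vertex :: "nat \<Rightarrow> nat \<Rightarrow> complex" where
  "koch_vertex n i = koch_curve n ! (i - 1)"

definition pt_angle :: "complex \<Rightarrow> complex \<Rightarrow> complex \<Rightarrow> real" where
  "pt_angle a b c = arccos (inner (a - b) (c - b) / (norm (a - b) * norm (c - b)))"

definition sharp_point :: "nat \<Rightarrow> nat \<Rightarrow> bool" where
  "sharp_point n i \<longleftrightarrow> 2 \<le> i \<and> i \<le> 4 ^ (n - 1) \<and>
     pt_angle (koch_vertex n (i - 1)) (koch_vertex n i) (koch_vertex n (i + 1)) = pi / 3"

definition koch_code :: "nat \<Rightarrow> nat list" where
  "koch_code n = map (\<lambda>k. if sharp_point n (2 * k + 1) then 1 else 0) [1 ..< 2 * 4 ^ (n - 2)]"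

end

theory Submission
  imports Defs
begin

definition w1 :: complex where "w1 = cis (pi/3)"
definition w2 :: complex where "w2 = Complex (-1/2) (- sqrt 3 / 2)"

lemma w1_eq: "w1 = Complex (1/2) (sqrt 3 / 2)"
  unfolding w1_def by (simp add: complex_eq_iff sin_60 cos_60)

lemma s3: "sqrt 3 * sqrt 3 = (3::real)" by simp

lemma w12: "w1 * w2 = 1 - w1"
  unfolding w1_eq w2_def by (simp add: complex_eq_iff algebra_simps s3)

lemma w11: "w1 * (1 - w1) = 1"
  unfolding w1_eq by (simp add: complex_eq_iff algebra_simps s3)

lemma w11': "(1 - w1) * w1 = 1" using w11 by (simp add: mult.commute)

lemma norm_w1: "cmod w1 = 1" unfolding w1_def by simp
lemma norm_w2: "cmod w2 = 1" unfolding w2_def cmod_def by (simp add: power2_eq_square s3)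

fun sh :: "nat \<Rightarrow> bool" where
  "sh x = (if x = 0 then False else if x mod 4 = 2 then True else if x mod 4 = 0 then sh (x div 4) else False)"
declare sh.simps[simp del]

definition rho :: "nat \<Rightarrow> complex" where "rho v = (if sh v then w2 else w1)"

lemma sh_4: "m \<noteq> 0 \<Longrightarrow> sh (4*m) = sh m"
  by (subst sh.simps) simp
lemma sh_1: "sh (4*m+1) = False" by (subst sh.simps) simp
lemma sh_2: "sh (4*m+2) = True"
proof -
  have "(4*m+2) mod 4 = (2::nat)" by presburger
  then show ?thesis by (subst sh.simps) simp
qed
lemma sh_3: "sh (4*m+3) = False" by (subst sh.simps) simp

definition edge :: "complex list \<Rightarrow> nat \<Rightarrow> complex" where
  "edge xs v = xs ! Suc v - xs ! v"

lemma refine_len: "xs \<noteq> [] \<Longrightarrow> length (koch_refine xs) = 4 * (length xs - 1) + 1"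
  by (induction xs rule: koch_refine.induct) (auto simp: koch_edge_def)

lemma refine_nth: "m + 1 < length xs \<Longrightarrow> r < 4 \<Longrightarrow>
   koch_refine xs ! (4*m+r) = koch_edge (xs!m) (xs!(m+1)) ! r"
proof (induction xs arbitrary: m rule: koch_refine.induct)
  case (3 p q rest)
  show ?case
  proof (cases m)
    case 0
    have "r = 0 \<or> r = 1 \<or> r = 2 \<or> r = 3" using 3 by auto
    then show ?thesis using 0 by (auto simp: nth_append koch_edge_def)
  next
    case (Suc m')
    have "koch_refine (p # q # rest) ! (4*m+r) = koch_refine (q # rest) ! (4*m'+r)"
      using Suc by (simp add: nth_append koch_edge_def)
    then show ?thesis using 3 Suc by simp
  qed
qed auto

lemma refine_vertex: "m < length xs \<Longrightarrow> koch_refine xs ! (4*m) = xs ! m"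
proof (induction xs arbitrary: m rule: koch_refine.induct)
  case (3 p q rest)
  show ?case
  proof (cases m)
    case 0 then show ?thesis using 3 by (simp add: nth_append koch_edge_def)
  next
    case (Suc m')
    have "koch_refine (p # q # rest) ! (4*m) = koch_refine (q # rest) ! (4*m')"
      using Suc by (simp add: nth_append koch_edge_def)
    then show ?thesis using 3 Suc by simp
  qed
qed auto

definition cc :: "nat \<Rightarrow> complex" where
  "cc r = (if r = 1 then w1 else if r = 2 then 1 - w1 else 1)"

lemma edge_refine: "m + 1 < length xs \<Longrightarrow> r < 4 \<Longrightarrow>
   edge (koch_refine xs) (4*m+r) = edge xs m / 3 * cc r"
proof -
  assume a: "m + 1 < length xs" "r < 4"
  have "r = 0 \<or> r = 1 \<or> r = 2 \<or> r = 3" using a by auto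
  moreover have "r = 3 \<Longrightarrow> ?thesis"
  proof -
    assume r: "r = 3"
    have "koch_refine xs ! Suc (4*m+r) = xs ! (m+1)"
      using refine_vertex[of "m+1" xs] a r by (simp add: algebra_simps)
    moreover have "koch_refine xs ! (4*m+r) = koch_edge (xs!m) (xs!(m+1)) ! 3"
      using refine_nth[OF a(1), of 3] r by simp
    ultimately show ?thesis using r unfolding edge_def cc_def koch_edge_def
      by (simp add: field_simps)
  qed
  moreover have "r < 3 \<Longrightarrow> ?thesis"
  proof -
    assume r: "r < 3"
    have "koch_refine xs ! Suc (4*m+r) = koch_edge (xs!m) (xs!(m+1)) ! (Suc r)"
      using refine_nth[OF a(1), of "Suc r"] r by simp
    moreover have "koch_refine xs ! (4*m+r) = koch_edge (xs!m) (xs!(m+1)) ! r"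
      using refine_nth[OF a(1), of r] r by simp
    moreover have "r = 0 \<or> r = 1 \<or> r = 2" using r by auto
    ultimately show ?thesis unfolding edge_def cc_def koch_edge_def w1_def
      by (auto simp: field_simps)
  qed
  ultimately show ?thesis by linarith
qed

lemma rho_4: "m \<noteq> 0 \<Longrightarrow> rho (4*m) = rho m" unfolding rho_def using sh_4 by simp
lemma rho_1: "rho (4*m+1) = w1" unfolding rho_def using sh_1 by simp
lemma rho_2: "rho (4*m+2) = w2" unfolding rho_def using sh_2 by simp
lemma rho_3: "rho (4*m+3) = w1" unfolding rho_def using sh_3 by simp

lemma curve_inv: "length (koch_curve (Suc k)) = 4^k + 1 \<and>
   edge (koch_curve (Suc k)) 0 = 1 / 3^k \<and>
   (\<forall>v. 1 \<le> v \<longrightarrow> v < 4^k \<longrightarrow>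
      edge (koch_curve (Suc k)) v = edge (koch_curve (Suc k)) (v-1) * rho v)"
proof (induction k)
  case 0
  then show ?case by (simp add: edge_def)
next
  case (Suc k)
  define xs where "xs = koch_curve (Suc k)"
  have IH: "length xs = 4^k+1 \<and> edge xs 0 = 1/3^k \<and>
     (\<forall>v. 1 \<le> v \<longrightarrow> v < 4^k \<longrightarrow> edge xs v = edge xs (v-1) * rho v)"
    using Suc.IH unfolding xs_def .
  have L: "length xs = 4^k+1" using IH by blast
  have E0: "edge xs 0 = 1/3^k" using IH by blast
  have T: "\<And>v. 1 \<le> v \<Longrightarrow> v < 4^k \<Longrightarrow> edge xs v = edge xs (v-1) * rho v"
    using IH by blast
  have xsn: "xs \<noteq> []" using L by (cases xs) auto
  have ys: "koch_curve (Suc (Suc k)) = koch_refine xs" unfolding xs_def by simp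
  have l1: "length (koch_refine xs) = 4^Suc k + 1" using refine_len[OF xsn] L by simp
  have "edge (koch_refine xs) (4*0+0) = edge xs 0 / 3 * cc 0"
    by (rule edge_refine) (use L in auto)
  then have e0: "edge (koch_refine xs) 0 = 1 / 3^Suc k"
    using E0 by (simp add: cc_def)
  have t: "edge (koch_refine xs) v = edge (koch_refine xs) (v-1) * rho v"
    if v: "1 \<le> v" "v < 4^Suc k" for v
  proof -
    define m where "m = v div 4"
    define r where "r = v mod 4"
    have vm: "v = 4*m+r" unfolding m_def r_def by simp
    have r4: "r < 4" unfolding r_def by simp
    have mL: "m + 1 < length xs" using v L unfolding m_def by auto
    have "r = 0 \<or> r = 1 \<or> r = 2 \<or> r = 3" using r4 by auto
    moreover have ?thesis if r0: "r = 0"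
    proof -
      have m0: "m \<noteq> 0" using v vm r0 by auto
      have "v - 1 = 4*(m-1)+3" using vm r0 m0 by simp
      then have A: "edge (koch_refine xs) (v-1) = edge xs (m-1) / 3"
        using edge_refine[of "m-1" xs 3] mL m0 by (simp add: cc_def)
      have B: "edge (koch_refine xs) v = edge xs m / 3"
        using edge_refine[of m xs 0] mL vm r0 by (simp add: cc_def)
      have C: "edge xs m = edge xs (m-1) * rho m" using T[of m] m0 mL L by simp
      have D: "rho v = rho m" using rho_4[OF m0] vm r0 by simp
      show ?thesis unfolding A B C D by simp
    qed
    moreover have ?thesis if r0: "r \<noteq> 0"
    proof -
      have "v - 1 = 4*m+(r-1)" using vm r0 by simp
      then have a: "edge (koch_refine xs) (v-1) = edge xs m / 3 * cc (r-1)"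
        using edge_refine[of m xs "r-1"] mL r4 by simp
      have b: "edge (koch_refine xs) v = edge xs m / 3 * cc r"
        using edge_refine[of m xs r] mL vm r4 by simp
      have "cc r = cc (r-1) * rho v"
      proof -
        have "r = 1 \<or> r = 2 \<or> r = 3" using r0 r4 by auto
        then show ?thesis using vm rho_1[of m] rho_2[of m] rho_3[of m] w12 w11'
          by (auto simp: cc_def)
      qed
      then show ?thesis unfolding a b by simp
    qed
    ultimately show ?thesis by blast
  qed
  show ?case using l1 e0 t ys by simp
qed

lemma rho_norm: "cmod (rho v) = 1" unfolding rho_def using norm_w1 norm_w2 by simp

lemma edge_nz: "v < 4^k \<Longrightarrow> edge (koch_curve (Suc k)) v \<noteq> 0"
proof (induction v)
  case 0 then show ?case using curve_inv[of k] by simp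
next
  case (Suc v)
  have "edge (koch_curve (Suc k)) (Suc v) = edge (koch_curve (Suc k)) v * rho (Suc v)"
    using curve_inv[of k] Suc.prems by auto
  moreover have "rho (Suc v) \<noteq> 0" using rho_norm[of "Suc v"] by auto
  ultimately show ?case using Suc by simp
qed

lemma angle_lemma: "e \<noteq> 0 \<Longrightarrow> cmod p = 1 \<Longrightarrow> pt_angle (b - e) b (b + e*p) = arccos (- Re p)"
proof -
  assume e: "e \<noteq> 0" and p: "cmod p = 1"
  have i: "inner (b - e - b) (b + e*p - b) = - Re p * (cmod e)^2"
    unfolding inner_complex_def cmod_power2 by (simp add: algebra_simps power2_eq_square)
  have n: "norm (b - e - b) * norm (b + e*p - b) = (cmod e)^2"
    using p by (simp add: norm_mult power2_eq_square)
  have "(cmod e)^2 \<noteq> 0" using e by simp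
  then show ?thesis unfolding pt_angle_def i n by simp
qed

lemma arccos_half: "arccos (1/2) = pi/3"
  using arccos_cos[of "pi/3"] cos_60 by simp

lemma arccos_mhalf: "arccos (-1/2) \<noteq> pi/3"
proof
  assume "arccos (-1/2) = pi/3"
  then have "cos (arccos (-1/2)) = cos (pi/3)" by simp
  then show False using cos_arccos[of "-1/2"] cos_60 by simp
qed

lemma Re_w1: "Re w1 = 1/2" unfolding w1_eq by simp
lemma Re_w2: "Re w2 = -1/2" unfolding w2_def by simp

lemma sharp_iff: "1 \<le> v \<Longrightarrow> v < 4^k \<Longrightarrow> sharp_point (Suc k) (v+1) \<longleftrightarrow> sh v"
proof -
  assume v: "1 \<le> v" "v < 4^k"
  define xs where "xs = koch_curve (Suc k)"
  have L: "length xs = 4^k+1" using curve_inv[of k] unfolding xs_def by simp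
  have a: "koch_vertex (Suc k) (v+1-1) = xs!v - edge xs (v-1)"
    using v unfolding koch_vertex_def edge_def xs_def by simp
  have b: "koch_vertex (Suc k) (v+1) = xs!v" unfolding koch_vertex_def xs_def by simp
  have T: "edge xs v = edge xs (v-1) * rho v" using curve_inv[of k] v unfolding xs_def by blast
  have c: "koch_vertex (Suc k) (v+1+1) = xs!v + edge xs (v-1) * rho v"
  proof -
    have "xs!(v+1) = xs!v + edge xs v" unfolding edge_def by simp
    then show ?thesis using T unfolding koch_vertex_def xs_def by simp
  qed
  have nz: "edge xs (v-1) \<noteq> 0" using edge_nz[of "v-1" k] v unfolding xs_def by simp
  have ang: "pt_angle (koch_vertex (Suc k) (v+1-1)) (koch_vertex (Suc k) (v+1))
      (koch_vertex (Suc k) (v+1+1)) = arccos (- Re (rho v))"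
    unfolding a b c by (rule angle_lemma[OF nz rho_norm])
  have rng: "2 \<le> v+1 \<and> v+1 \<le> 4 ^ (Suc k - 1)" using v by simp
  have f1: "arccos (- Re w1) \<noteq> pi/3" unfolding Re_w1 using arccos_mhalf by simp
  have f2: "arccos (- Re w2) = pi/3" unfolding Re_w2 using arccos_half by simp
  show ?thesis
    unfolding sharp_point_def ang using rng f1 f2 by (auto simp: rho_def)
qed

lemma sh_period: "x \<noteq> 0 \<Longrightarrow> x < 4^p \<Longrightarrow> sh (x + j*4^p) = sh x"
proof (induction p arbitrary: x)
  case 0 then show ?case by simp
next
  case (Suc p)
  have e: "x + j*4^Suc p = x + (j*4^p)*4" by (simp add: mult_ac)
  have m: "(x + j*4^Suc p) mod 4 = x mod 4" unfolding e by (rule mod_mult_self1)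
  have d: "(x + j*4^Suc p) div 4 = x div 4 + j*4^p" unfolding e by simp
  show ?case
  proof (cases "x mod 4 = 0")
    case True
    have "x div 4 \<noteq> 0" using True Suc.prems by auto
    moreover have "x div 4 < 4^p" using Suc.prems by auto
    ultimately have "sh (x div 4 + j*4^p) = sh (x div 4)" using Suc.IH by blast
    then show ?thesis using True Suc.prems m d
      by (subst (1 2) sh.simps) simp
  next
    case False
    then show ?thesis using Suc.prems m
      by (subst (1 2) sh.simps) simp
  qed
qed

definition C :: "nat \<Rightarrow> nat list" where
  "C m = map (\<lambda>k. if sh (2*k) then 1 else 0) [1..<2*4^m]"

lemma shift_map: "map f [a+1..<a+M] = map (\<lambda>k. f (k+a)) [1..<M]"
  by (rule nth_equalityI) (auto simp: algebra_simps)

lemma sh_pow: "x \<noteq> 0 \<Longrightarrow> sh (x * 4^p) = sh x"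
proof (induction p)
  case (Suc p)
  have "x * 4^Suc p = 4 * (x*4^p)" by simp
  then show ?case using sh_4[of "x*4^p"] Suc by (simp add: mult_ac)
qed simp

lemma upt_split: "i \<le> j \<Longrightarrow> j \<le> k \<Longrightarrow> [i..<j] @ [j..<k] = [i..<k]"
  using upt_add_eq_append[of i j "k-j"] by simp

lemma C_rec: "C (Suc m) = C m @ [0] @ C m @ [1] @ C m @ [0] @ C m"
proof -
  define M :: nat where "M = 2*4^m"
  define g :: "nat \<Rightarrow> nat" where "g = (\<lambda>k. if sh (2*k) then 1 else 0)"
  have M1: "M \<ge> 2" unfolding M_def by simp
  have per: "map (\<lambda>k. g (k + a)) [1..<M] = C m" if a: "a = j*M" for j a
  proof -
    have "map (\<lambda>k. g (k + a)) [1..<M] = map g [1..<M]"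
    proof (rule map_cong[OF refl])
      fix k assume k: "k \<in> set [1..<M]"
      have "sh (2*k + j*4^Suc m) = sh (2*k)"
        by (rule sh_period) (use k in \<open>auto simp: M_def\<close>)
      then show "g (k + a) = g k" unfolding g_def a M_def by (simp add: algebra_simps)
    qed
    then show ?thesis unfolding C_def g_def M_def by simp
  qed
  have split: "[1..<4*M] = [1..<M] @ [M..<M+1] @ [M+1..<M+M] @ [M+M..<M+M+1] @ [M+M+1..<M+M+M]
      @ [M+M+M..<M+M+M+1] @ [M+M+M+1..<M+M+M+M]"
  proof -
    have h: "4*M = M+M+M+M" by simp
    have a1: "[M+M+M..<M+M+M+1] @ [M+M+M+1..<M+M+M+M] = [M+M+M..<M+M+M+M]"
      by (rule upt_split) (use M1 in auto)
    have a2: "[M+M+1..<M+M+M] @ [M+M+M..<M+M+M+M] = [M+M+1..<M+M+M+M]"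
      by (rule upt_split) (use M1 in auto)
    have a3: "[M+M..<M+M+1] @ [M+M+1..<M+M+M+M] = [M+M..<M+M+M+M]"
      by (rule upt_split) (use M1 in auto)
    have a4: "[M+1..<M+M] @ [M+M..<M+M+M+M] = [M+1..<M+M+M+M]"
      by (rule upt_split) (use M1 in auto)
    have a5: "[M..<M+1] @ [M+1..<M+M+M+M] = [M..<M+M+M+M]"
      by (rule upt_split) (use M1 in auto)
    have a6: "[1..<M] @ [M..<M+M+M+M] = [1..<M+M+M+M]"
      by (rule upt_split) (use M1 in auto)
    show ?thesis by (simp only: a1 a2 a3 a4 a5 a6 h)
  qed
  have v1: "g M = 0"
  proof -
    have "sh (2*M) = sh (1 * 4^Suc m)" unfolding M_def by simp
    also have "\<dots> = sh 1" by (rule sh_pow) auto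
    finally show ?thesis unfolding g_def by (simp add: sh.simps)
  qed
  have v2: "g (M+M) = 1"
  proof -
    have "sh (2*(M+M)) = sh (2 * 4^Suc m)" unfolding M_def by simp
    also have "\<dots> = sh 2" by (rule sh_pow) auto
    finally show ?thesis unfolding g_def by (simp add: sh.simps)
  qed
  have v3: "g (M+M+M) = 0"
  proof -
    have "sh (2*(M+M+M)) = sh (3 * 4^Suc m)" unfolding M_def by simp
    also have "\<dots> = sh 3" by (rule sh_pow) auto
    finally show ?thesis unfolding g_def by (simp add: sh.simps)
  qed
  have p0: "map g [1..<M] = C m" using per[of 0 0] by simp
  have p1: "map g [M+1..<M+M] = C m" using per[of M 1] shift_map[of g M M] by simp
  have p2: "map g [M+M+1..<M+M+M] = C m" using per[of "M+M" 2] shift_map[of g "M+M" M] by simp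
  have p3: "map g [M+M+M+1..<M+M+M+M] = C m"
    using per[of "M+M+M" 3] shift_map[of g "M+M+M" M] by simp
  have "C (Suc m) = map g [1..<4*M]" unfolding C_def g_def M_def by simp
  also have "\<dots> = C m @ [0] @ C m @ [1] @ C m @ [0] @ C m"
    unfolding split map_append p0 p1 p2 p3 using v1 v2 v3 by simp
  finally show ?thesis .
qed

lemma C0: "C 0 = [1]"
proof -
  have "sh 2" by (simp add: sh.simps)
  then show ?thesis unfolding C_def by (simp add: numeral_2_eq_2)
qed

lemma count1: "3 * count_list (C m) 1 + 1 = 4^Suc m"
  by (induction m) (simp_all add: C0 C_rec)

lemma count0: "3 * count_list (C m) 0 + 2 = 2 * 4^m"
  by (induction m) (simp_all add: C0 C_rec)

lemma code_C: "koch_code (Suc (Suc m)) = C m"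
proof -
  have e: "Suc (Suc m) - 2 = m" by simp
  show ?thesis unfolding koch_code_def C_def e
proof (rule map_cong[OF refl])
  fix k assume k: "k \<in> set [1..<2 * 4 ^ m]"
  have "sharp_point (Suc (Suc m)) (2*k+1) \<longleftrightarrow> sh (2*k)"
    by (rule sharp_iff) (use k in auto)
  then show "(if sharp_point (Suc (Suc m)) (2 * k + 1) then 1 else 0) =
    (if sh (2 * k) then 1 else 0)" by simp
qed
qed

lemma shx: "x \<ge> 1 \<Longrightarrow> sh (2*x) \<longleftrightarrow> (\<exists>i k. 1 \<le> k \<and> x = 4^i * (2*k-1))"
proof (induction x rule: less_induct)
  case (less x)
  show ?case
  proof (cases "odd x")
    case True
    have "(2*x) mod 4 = 2" using True by presburger
    then have "sh (2*x)" by (simp add: sh.simps)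
    moreover have "x = 4^0 * (2*((x+1) div 2) - 1)" using True by (simp; presburger)
    moreover have "1 \<le> (x+1) div 2" using less.prems by simp
    ultimately show ?thesis by blast
  next
    case False
    have m0: "(2*x) mod 4 = 0" using False by presburger
    have sh1: "sh (2*x) = sh (x div 2)" using m0 less.prems by (subst sh.simps) simp
    show ?thesis
    proof (cases "x mod 4 = 2")
      case True
      have "odd (x div 2)" using True by presburger
      then have "(x div 2) mod 4 = 1 \<or> (x div 2) mod 4 = 3" by presburger
      then have "\<not> sh (x div 2)" by (subst sh.simps) auto
      moreover have "\<not> (\<exists>i k. 1 \<le> k \<and> x = 4^i * (2*k-1))"
      proof
        assume "\<exists>i k. 1 \<le> k \<and> x = 4^i * (2*k-1)"
        then obtain i k where ik: "1 \<le> k" "x = 4^i * (2*k-1)" by blast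
        show False
        proof (cases i)
          case 0 then show False using ik False by simp
        next
          case (Suc i')
          then have "x = 4 * (4^i' * (2*k-1))" using ik by simp
          then show False using True by simp
        qed
      qed
      ultimately show ?thesis using sh1 by simp
    next
      case F2: False
      have x4: "x mod 4 = 0" using False F2 by presburger
      define z where "z = x div 4"
      have xz: "x = 4*z" unfolding z_def using x4 by presburger
      have z1: "z \<ge> 1" using xz less.prems by simp
      have "x div 2 = 2*z" using xz by simp
      then have "sh (2*x) = sh (2*z)" using sh1 by simp
      also have "\<dots> \<longleftrightarrow> (\<exists>i k. 1 \<le> k \<and> z = 4^i * (2*k-1))"
        using less.IH[of z] z1 xz by simp
      also have "\<dots> \<longleftrightarrow> (\<exists>i k. 1 \<le> k \<and> x = 4^i * (2*k-1))"
      proof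
        assume "\<exists>i k. 1 \<le> k \<and> z = 4^i * (2*k-1)"
        then obtain i k where "1 \<le> k" "z = 4^i * (2*k-1)" by blast
        then have "1 \<le> k \<and> x = 4^Suc i * (2*k-1)" using xz by simp
        then show "\<exists>i k. 1 \<le> k \<and> x = 4^i * (2*k-1)" by blast
      next
        assume "\<exists>i k. 1 \<le> k \<and> x = 4^i * (2*k-1)"
        then obtain i k where ik: "1 \<le> k" "x = 4^i * (2*k-1)" by blast
        show "\<exists>i k. 1 \<le> k \<and> z = 4^i * (2*k-1)"
        proof (cases i)
          case 0 then show ?thesis using ik False by simp
        next
          case (Suc i')
          then have "z = 4^i' * (2*k-1)" using ik xz by simp
          then show ?thesis using ik by blast
        qed
      qed
      finally show ?thesis .
    qed
  qed
qed

lemma bound: fixes x m k i :: nat shows "x < 2*4^m \<Longrightarrow> 1 \<le> k \<Longrightarrow> x = 4^i * (2*k-1) \<Longrightarrow> i \<le> m \<and> k \<le> 4^(m-i)"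
proof -
  assume x: "x < 2*4^m" and k: "1 \<le> k" and e: "x = 4^i * (2*k-1)"
  have ge: "x \<ge> 4^i" using e k by simp
  have im: "i \<le> m"
  proof (rule ccontr)
    assume "\<not> i \<le> m"
    then have "4^Suc m \<le> (4::nat)^i" by (intro power_increasing) auto
    then show False using x ge by simp
  qed
  have "(4::nat)^m = 4^i * 4^(m-i)" using im by (simp add: power_add[symmetric])
  then have "4^i * (2*k-1) < 4^i * (2*4^(m-i))" using x e by (simp add: mult_ac)
  then have "2*k-1 < 2*4^(m-i)" by simp
  then show ?thesis using im by simp
qed

theorem mainTheorem4:
  fixes n :: nat
  assumes "n \<ge> 2"
  shows "(\<forall>idx. 1 \<le> idx \<and> idx \<le> 2 * 4 ^ (n - 2) - 1 \<longrightarrow>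
            (koch_code n ! (idx - 1) = 1 \<longleftrightarrow>
              (\<exists>i k. i \<le> n - 2 \<and> 1 \<le> k \<and> k \<le> 4 ^ (n - 2 - i) \<and> idx = 4 ^ i * (2 * k - 1))))
       \<and> real (count_list (koch_code n) 1) = (4 ^ (n - 1) - 1) / 3
       \<and> real (count_list (koch_code n) 0) = 2 * (4 ^ (n - 2) - 1) / 3"
proof -
  obtain m where n: "n = Suc (Suc m)" using assms by (metis add_2_eq_Suc le_Suc_ex)
  have kc: "koch_code n = C m" unfolding n by (rule code_C)
  have P1: "koch_code n ! (idx - 1) = 1 \<longleftrightarrow>
              (\<exists>i k. i \<le> n - 2 \<and> 1 \<le> k \<and> k \<le> 4 ^ (n - 2 - i) \<and> idx = 4 ^ i * (2 * k - 1))"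
    if idx: "1 \<le> idx" "idx \<le> 2 * 4 ^ (n - 2) - 1" for idx
  proof -
    have lt: "idx < 2*4^m" using idx n by simp
    have "koch_code n ! (idx - 1) = (if sh (2*idx) then 1 else 0)"
      unfolding kc C_def using idx lt by simp
    then have "koch_code n ! (idx - 1) = 1 \<longleftrightarrow> sh (2*idx)" by simp
    also have "\<dots> \<longleftrightarrow> (\<exists>i k. 1 \<le> k \<and> idx = 4^i * (2*k-1))" using shx idx by simp
    also have "\<dots> \<longleftrightarrow> (\<exists>i k. i \<le> n - 2 \<and> 1 \<le> k \<and> k \<le> 4 ^ (n - 2 - i) \<and> idx = 4 ^ i * (2 * k - 1))"
      using bound[OF lt] n by auto
    finally show ?thesis .
  qed
  have c1: "real (count_list (koch_code n) 1) = (4 ^ (n - 1) - 1) / 3"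
  proof -
    have "real (3 * count_list (C m) 1 + 1) = real (4^Suc m)" using count1 by presburger
    then have "3 * real (count_list (C m) 1) + 1 = 4^Suc m" by simp
    moreover have "count_list (koch_code n) 1 = count_list (C m) 1" using kc by simp
    ultimately show ?thesis unfolding n by simp
  qed
  have c0: "real (count_list (koch_code n) 0) = 2 * (4 ^ (n - 2) - 1) / 3"
  proof -
    have "real (3 * count_list (C m) 0 + 2) = real (2*4^m)" using count0 by presburger
    then have "3 * real (count_list (C m) 0) + 2 = 2*4^m" by simp
    moreover have "count_list (koch_code n) 0 = count_list (C m) 0" using kc by simp
    ultimately show ?thesis unfolding n by simp
  qed
  show ?thesis using P1 c1 c0 by blast
qed

end
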